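(* Let $G$ be a nonabelian finite simple group and $S$ a component of $\hat Y(G)$ whose type (genus and cell structure) occurs exactly $k$ times among the components of $\hat Y(G)$, where $k!<|G|$. Then the subquotient $\bar Q_S$ associated to $S$ (for the conjugation action of $G$) equals $G$. If moreover $S$ is non-equivar, then $G=\bar Q_S$ is the group of orientation preserving automorphisms of the cell structure of $S$.
   Context: Construction: for a finite nonabelian group $G$, $X(G)$ is the 2-dimensional simplicial complex with vertices $(g,1)$ ("type 1") and $(g,2)$ ("type 2"), $g\in G$, and oriented triangles $[(a,1),(b,1),(ab,2)]$ for $ab\ne ba$; $\hat Y(G)$ is its canonical resolution of singularities (vertices whose links are several circles are split, one vertex per circle), a disjoint union of closed connected oriented triangulated surfaces called components. Each component has a closed 2-cell structure: 0-cells the type 1 vertices, 1-cells the edges joining type 1 vertices, 2-cells the unions of triangles around a type 2 vertex. For a component $S$ containing the edge $[(x,1),(y,1)]$, $G$ acts by conjugation $(g,i)\mapsto(hgh^{-1},i)$; $G_S$ is the stabilizer of $S$, and $\bar Q_S=G_S/(C(x)\cap C(y))$ ($C(\cdot)$ = centralizer), which acts faithfully on $S$. $S$ is non-equivar if the valencies (numbers of incident 2-cells) $\lambda_1$ of $(x,1)$ and $\lambda_2$ of $(y,1)$ differ, i.e. its Schläfli symbol is $\{n,\lambda_1\text{-}\lambda_2\}$ with $\lambda_1\ne\lambda_2$. *)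

theory Defs
  imports "HOL-Algebra.Algebra"
begin

text \<open>The oriented triangle [(a,1),(b,1),(ab,2)] (with ab \<noteq> ba) is identified with the
  dart (a,b), i.e. the oriented type-1 edge from (a,1) to (b,1) it contains.
  Every edge of X(G) lies in exactly two triangles, and after resolving the singular
  vertices the connected components are exactly the classes of triangles under
  the edge-adjacency relation.\<close>

definition tri :: "('a, 'b) monoid_scheme \<Rightarrow> ('a \<times> 'a) set" where
  "tri G = {(a, b). a \<in> carrier G \<and> b \<in> carrier G \<and> a \<otimes>\<^bsub>G\<^esub> b \<noteq> b \<otimes>\<^bsub>G\<^esub> a}"

text \<open>Triangle across the edge [(a,1),(b,1)].\<close>
definition iota :: "'a \<times> 'a \<Rightarrow> 'a \<times> 'a" where
  "iota d = (snd d, fst d)"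

text \<open>Rotation around the type-1 vertex (a,1): the next triangle having (a,1) as first vertex.\<close>
definition sigma :: "('a, 'b) monoid_scheme \<Rightarrow> 'a \<times> 'a \<Rightarrow> 'a \<times> 'a" where
  "sigma G d = (fst d, fst d \<otimes>\<^bsub>G\<^esub> snd d \<otimes>\<^bsub>G\<^esub> inv\<^bsub>G\<^esub> (fst d))"

text \<open>Triangle across the edge [(b,1),(ab,2)].\<close>
definition phi :: "('a, 'b) monoid_scheme \<Rightarrow> 'a \<times> 'a \<Rightarrow> 'a \<times> 'a" where
  "phi G d = (snd d, inv\<^bsub>G\<^esub> (snd d) \<otimes>\<^bsub>G\<^esub> fst d \<otimes>\<^bsub>G\<^esub> snd d)"

text \<open>Edge adjacency of triangles: across [(a,1),(b,1)], [(b,1),(ab,2)], [(ab,2),(a,1)].\<close>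
definition adj :: "('a, 'b) monoid_scheme \<Rightarrow> (('a \<times> 'a) \<times> ('a \<times> 'a)) set" where
  "adj G = {(d, e). d \<in> tri G \<and> e \<in> tri G \<and>
             (e = iota d \<or> e = phi G d \<or> e = iota (sigma G d))}"

definition comp_of :: "('a, 'b) monoid_scheme \<Rightarrow> 'a \<times> 'a \<Rightarrow> ('a \<times> 'a) set" where
  "comp_of G d = {e. (d, e) \<in> (adj G \<union> (adj G)\<inverse>)\<^sup>*}"

definition components :: "('a, 'b) monoid_scheme \<Rightarrow> ('a \<times> 'a) set set" where
  "components G = comp_of G ` tri G"

text \<open>Isomorphism of cell structures (orientation preserving or reversing).\<close>
definition cell_iso :: "('a, 'b) monoid_scheme \<Rightarrow> ('a \<times> 'a) set \<Rightarrow> ('a \<times> 'a) set \<Rightarrow> bool" where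
  "cell_iso G S S' \<longleftrightarrow> (\<exists>\<psi>. bij_betw \<psi> S S' \<and> (\<forall>d\<in>S. \<psi> (iota d) = iota (\<psi> d)) \<and>
      ((\<forall>d\<in>S. \<psi> (sigma G d) = sigma G (\<psi> d)) \<or> (\<forall>d\<in>S. sigma G (\<psi> (sigma G d)) = \<psi> d)))"

definition aut_plus :: "('a, 'b) monoid_scheme \<Rightarrow> ('a \<times> 'a) set \<Rightarrow> ('a \<times> 'a \<Rightarrow> 'a \<times> 'a) set" where
  "aut_plus G S = {\<psi>. \<psi> \<in> extensional S \<and> bij_betw \<psi> S S \<and>
      (\<forall>d\<in>S. \<psi> (iota d) = iota (\<psi> d)) \<and> (\<forall>d\<in>S. \<psi> (sigma G d) = sigma G (\<psi> d))}"

text \<open>Valency of the type-1 vertex at the start of dart d (number of incident 2-cells).\<close>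
definition valency :: "('a, 'b) monoid_scheme \<Rightarrow> 'a \<times> 'a \<Rightarrow> nat" where
  "valency G d = card {(sigma G ^^ n) d | n. True}"

definition conj_dart :: "('a, 'b) monoid_scheme \<Rightarrow> 'a \<Rightarrow> 'a \<times> 'a \<Rightarrow> 'a \<times> 'a" where
  "conj_dart G g d = (g \<otimes>\<^bsub>G\<^esub> fst d \<otimes>\<^bsub>G\<^esub> inv\<^bsub>G\<^esub> g, g \<otimes>\<^bsub>G\<^esub> snd d \<otimes>\<^bsub>G\<^esub> inv\<^bsub>G\<^esub> g)"

definition stab :: "('a, 'b) monoid_scheme \<Rightarrow> ('a \<times> 'a) set \<Rightarrow> 'a set" where
  "stab G S = {g \<in> carrier G. conj_dart G g ` S = S}"

definition centr :: "('a, 'b) monoid_scheme \<Rightarrow> 'a \<Rightarrow> 'a set" where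
  "centr G x = {g \<in> carrier G. g \<otimes>\<^bsub>G\<^esub> x = x \<otimes>\<^bsub>G\<^esub> g}"

definition Qbar :: "('a, 'b) monoid_scheme \<Rightarrow> ('a \<times> 'a) set \<Rightarrow> 'a \<Rightarrow> 'a \<Rightarrow> 'a set monoid" where
  "Qbar G S x y = (G\<lparr>carrier := stab G S\<rparr>) Mod (centr G x \<inter> centr G y)"

end

theory Submission imports Defs "HOL-Combinatorics.Permutations" begin


context group begin

definition cj :: "'a \<Rightarrow> 'a \<Rightarrow> 'a" where "cj g a = g \<otimes> a \<otimes> inv g"

lemma inv_cancel_l: "g \<in> carrier G \<Longrightarrow> a \<in> carrier G \<Longrightarrow> inv g \<otimes> (g \<otimes> a) = a"
  by (simp add: m_assoc[symmetric])
lemma inv_cancel_l2: "g \<in> carrier G \<Longrightarrow> a \<in> carrier G \<Longrightarrow> g \<otimes> (inv g \<otimes> a) = a"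
  by (simp add: m_assoc[symmetric])

lemma cj_closed[simp]: "g \<in> carrier G \<Longrightarrow> a \<in> carrier G \<Longrightarrow> cj g a \<in> carrier G"
  by (simp add: cj_def)
lemma cj_mult: "g \<in> carrier G \<Longrightarrow> h \<in> carrier G \<Longrightarrow> a \<in> carrier G \<Longrightarrow> cj (g \<otimes> h) a = cj g (cj h a)"
  by (simp add: cj_def m_assoc inv_mult_group)
lemma cj_one[simp]: "a \<in> carrier G \<Longrightarrow> cj \<one> a = a"
  by (simp add: cj_def)
lemma cj_inv_cancel[simp]: "g \<in> carrier G \<Longrightarrow> a \<in> carrier G \<Longrightarrow> cj (inv g) (cj g a) = a"
  by (simp add: cj_mult[symmetric])
lemma cj_inv_cancel2[simp]: "g \<in> carrier G \<Longrightarrow> a \<in> carrier G \<Longrightarrow> cj g (cj (inv g) a) = a"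
  by (simp add: cj_mult[symmetric])
lemma cj_hom: "g \<in> carrier G \<Longrightarrow> a \<in> carrier G \<Longrightarrow> b \<in> carrier G \<Longrightarrow> cj g (a \<otimes> b) = cj g a \<otimes> cj g b"
  by (simp add: cj_def m_assoc inv_cancel_l)
lemma cj_inv: "g \<in> carrier G \<Longrightarrow> a \<in> carrier G \<Longrightarrow> cj g (inv a) = inv (cj g a)"
  by (simp add: cj_def m_assoc inv_mult_group)
lemma cj_inj: "g \<in> carrier G \<Longrightarrow> a \<in> carrier G \<Longrightarrow> b \<in> carrier G \<Longrightarrow> cj g a = cj g b \<longleftrightarrow> a = b"
  by (metis cj_inv_cancel)
lemma cj_self: "a \<in> carrier G \<Longrightarrow> cj a a = a"
  by (simp add: cj_def m_assoc)
lemma cj_inv_self[simp]: "a \<in> carrier G \<Longrightarrow> cj (inv a) a = a"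
  by (simp add: cj_def m_assoc)
lemma cj_comm: "g \<in> carrier G \<Longrightarrow> a \<in> carrier G \<Longrightarrow> cj g a = a \<longleftrightarrow> g \<otimes> a = a \<otimes> g"
proof -
  assume g: "g \<in> carrier G" and a: "a \<in> carrier G"
  have "cj g a \<otimes> g = g \<otimes> a" using g a by (simp add: cj_def m_assoc)
  thus ?thesis using g a by (metis cj_closed r_cancel m_closed)
qed
lemma cj_mult_r: "g \<in> carrier G \<Longrightarrow> a \<in> carrier G \<Longrightarrow> cj g a \<otimes> g = g \<otimes> a"
  by (simp add: cj_def m_assoc)
lemma cj_cj: "g \<in> carrier G \<Longrightarrow> a \<in> carrier G \<Longrightarrow> b \<in> carrier G \<Longrightarrow> cj g (cj a b) = cj (cj g a) (cj g b)"
proof -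
  assume g: "g \<in> carrier G" and a: "a \<in> carrier G" and b: "b \<in> carrier G"
  have "cj (cj g a) (cj g b) = cj (cj g a \<otimes> g) b" using g a b by (simp add: cj_mult)
  also have "\<dots> = cj g (cj a b)" using g a b by (simp add: cj_mult_r cj_mult)
  finally show ?thesis by simp
qed

lemma conj_dart_eq: "conj_dart G g d = (cj g (fst d), cj g (snd d))"
  by (simp add: conj_dart_def cj_def)
lemma sigma_eq: "sigma G d = (fst d, cj (fst d) (snd d))"
  by (simp add: sigma_def cj_def)
lemma phi_eq: "fst d \<in> carrier G \<Longrightarrow> snd d \<in> carrier G \<Longrightarrow> phi G d = (snd d, cj (inv (snd d)) (fst d))"
  by (simp add: phi_def cj_def)

lemma comm_cj: "g \<in> carrier G \<Longrightarrow> a \<in> carrier G \<Longrightarrow> b \<in> carrier G \<Longrightarrow>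
   (cj g a \<otimes> cj g b = cj g b \<otimes> cj g a) \<longleftrightarrow> (a \<otimes> b = b \<otimes> a)"
  by (simp add: cj_hom[symmetric] cj_inj)
lemma tri_iota: "d \<in> tri G \<Longrightarrow> iota d \<in> tri G"
  by (auto simp: tri_def iota_def)
lemma tri_carr: "d \<in> tri G \<Longrightarrow> fst d \<in> carrier G \<and> snd d \<in> carrier G"
  by (auto simp: tri_def)
lemma tri_conj: "d \<in> tri G \<Longrightarrow> g \<in> carrier G \<Longrightarrow> conj_dart G g d \<in> tri G"
  by (cases d) (auto simp: tri_def conj_dart_eq comm_cj)
lemma tri_sigma: "d \<in> tri G \<Longrightarrow> sigma G d \<in> tri G"
proof -
  assume d: "d \<in> tri G"
  then obtain a b where ab: "d = (a,b)" "a \<in> carrier G" "b \<in> carrier G" "a \<otimes> b \<noteq> b \<otimes> a"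
    by (auto simp: tri_def)
  have "cj a a \<otimes> cj a b \<noteq> cj a b \<otimes> cj a a"
    using ab by (simp add: comm_cj)
  then show ?thesis using ab by (auto simp: tri_def sigma_eq cj_self)
qed
lemma tri_phi: "d \<in> tri G \<Longrightarrow> phi G d \<in> tri G"
proof -
  assume d: "d \<in> tri G"
  then obtain a b where ab: "d = (a,b)" "a \<in> carrier G" "b \<in> carrier G" "a \<otimes> b \<noteq> b \<otimes> a"
    by (auto simp: tri_def)
  have "cj (inv b) b \<otimes> cj (inv b) a \<noteq> cj (inv b) a \<otimes> cj (inv b) b"
    using ab by (simp only: comm_cj inv_closed) auto
  then have "b \<otimes> cj (inv b) a \<noteq> cj (inv b) a \<otimes> b" using ab by simp
  then show ?thesis using ab by (auto simp: tri_def phi_eq)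
qed

lemma conj_mult: "g \<in> carrier G \<Longrightarrow> h \<in> carrier G \<Longrightarrow> fst d \<in> carrier G \<Longrightarrow> snd d \<in> carrier G \<Longrightarrow>
   conj_dart G (g \<otimes> h) d = conj_dart G g (conj_dart G h d)"
  by (simp add: conj_dart_eq cj_mult)
lemma conj_inv_cancel[simp]: "g \<in> carrier G \<Longrightarrow> fst d \<in> carrier G \<Longrightarrow> snd d \<in> carrier G \<Longrightarrow>
   conj_dart G (inv g) (conj_dart G g d) = d"
  by (simp add: conj_dart_eq)
lemma conj_inv_cancel2[simp]: "g \<in> carrier G \<Longrightarrow> fst d \<in> carrier G \<Longrightarrow> snd d \<in> carrier G \<Longrightarrow>
   conj_dart G g (conj_dart G (inv g) d) = d"
  by (simp add: conj_dart_eq)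
lemma conj_iota: "conj_dart G g (iota d) = iota (conj_dart G g d)"
  by (simp add: conj_dart_eq iota_def)
lemma conj_sigma: "g \<in> carrier G \<Longrightarrow> fst d \<in> carrier G \<Longrightarrow> snd d \<in> carrier G \<Longrightarrow>
   conj_dart G g (sigma G d) = sigma G (conj_dart G g d)"
  by (simp add: conj_dart_eq sigma_eq cj_cj[of g "fst d" "snd d"])
lemma conj_phi: "g \<in> carrier G \<Longrightarrow> fst d \<in> carrier G \<Longrightarrow> snd d \<in> carrier G \<Longrightarrow>
   conj_dart G g (phi G d) = phi G (conj_dart G g d)"
  by (simp add: conj_dart_eq phi_eq cj_cj[of g "inv (snd d)" "fst d"] cj_inv)
lemma sigma_conj: "fst d \<in> carrier G \<Longrightarrow> sigma G d = conj_dart G (fst d) d"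
  by (simp add: conj_dart_eq sigma_eq cj_self)
lemma phi_conj: "fst d \<in> carrier G \<Longrightarrow> snd d \<in> carrier G \<Longrightarrow> phi G d = conj_dart G (inv (snd d)) (iota d)"
  by (simp add: conj_dart_eq phi_eq iota_def cj_inv cj_self)
lemma sigma_inj: "fst d \<in> carrier G \<Longrightarrow> snd d \<in> carrier G \<Longrightarrow> fst e \<in> carrier G \<Longrightarrow> snd e \<in> carrier G \<Longrightarrow>
   sigma G d = sigma G e \<Longrightarrow> d = e"
  by (cases d, cases e) (auto simp: sigma_eq cj_inj)

end


context group begin

lemma iota_iota[simp]: "iota (iota d) = d" by (simp add: iota_def)

lemma adj_tri: "(d,e) \<in> adj G \<Longrightarrow> d \<in> tri G \<and> e \<in> tri G"
  by (simp add: adj_def)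

lemma comp_tri: "d \<in> tri G \<Longrightarrow> comp_of G d \<subseteq> tri G"
proof
  fix e assume d: "d \<in> tri G" and "e \<in> comp_of G d"
  then have "(d,e) \<in> (adj G \<union> (adj G)\<inverse>)\<^sup>*" by (simp add: comp_of_def)
  then show "e \<in> tri G"
    by (induction rule: rtrancl_induct) (use d adj_tri in auto)
qed

lemma comp_self: "d \<in> comp_of G d"
  by (simp add: comp_of_def)

lemma comp_eq: "e \<in> comp_of G d \<Longrightarrow> comp_of G e = comp_of G d"
proof -
  let ?R = "adj G \<union> (adj G)\<inverse>"
  assume "e \<in> comp_of G d"
  then have de: "(d,e) \<in> ?R\<^sup>*" by (simp add: comp_of_def)
  have sym: "?R\<inverse> = ?R" by auto
  have "(e,d) \<in> (?R\<inverse>)\<^sup>*" using de by (rule rtrancl_converseI)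
  then have ed: "(e,d) \<in> ?R\<^sup>*" using sym by simp
  show ?thesis
    using de ed by (auto simp: comp_of_def intro: rtrancl_trans)
qed

lemma comp_step: "d \<in> comp_of G d0 \<Longrightarrow> (d,e) \<in> adj G \<Longrightarrow> e \<in> comp_of G d0"
  by (auto simp: comp_of_def intro: rtrancl_into_rtrancl)

lemma comp_closed:
  assumes d0: "d0 \<in> tri G" and d: "d \<in> comp_of G d0"
  shows "iota d \<in> comp_of G d0" "sigma G d \<in> comp_of G d0" "phi G d \<in> comp_of G d0"
proof -
  have dt: "d \<in> tri G" using comp_tri[OF d0] d by auto
  show "iota d \<in> comp_of G d0"
    by (rule comp_step[OF d]) (simp add: adj_def dt tri_iota)
  have i: "iota (sigma G d) \<in> comp_of G d0"
    by (rule comp_step[OF d]) (simp add: adj_def dt tri_iota tri_sigma)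
  have "(iota (sigma G d), sigma G d) \<in> adj G"
    using tri_iota[OF tri_sigma[OF dt]] tri_sigma[OF dt] by (simp add: adj_def)
  then show "sigma G d \<in> comp_of G d0"
    using comp_step[OF i] by blast
  show "phi G d \<in> comp_of G d0"
    by (rule comp_step[OF d]) (simp add: adj_def dt tri_phi)
qed

lemma adj_rev:
  assumes "(e,d) \<in> adj G"
  shows "e = iota d \<or> e = iota (sigma G d) \<or> e = phi G d"
proof -
  from assms have et: "e \<in> tri G" and dt: "d \<in> tri G" and
    c: "d = iota e \<or> d = phi G e \<or> d = iota (sigma G e)" by (auto simp: adj_def)
  obtain a b where ab: "e = (a,b)" "a \<in> carrier G" "b \<in> carrier G" using et by (auto simp: tri_def)
  from c show ?thesis
  proof (elim disjE)
    assume "d = iota e" then show ?thesis by (simp add: iota_def)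
  next
    assume "d = phi G e"
    then have "d = (b, cj (inv b) a)" using ab by (simp add: phi_eq)
    then have "iota (sigma G d) = e" using ab by (simp add: sigma_eq iota_def)
    then show ?thesis by simp
  next
    assume "d = iota (sigma G e)"
    then have "d = (cj a b, a)" using ab by (simp add: sigma_eq iota_def)
    then have "phi G d = e" using ab by (simp add: phi_eq cj_inv[symmetric])
    then show ?thesis by simp
  qed
qed

lemma comp_induct:
  assumes d0: "d0 \<in> tri G" and P0: "P d0"
    and stp: "\<And>d. d \<in> comp_of G d0 \<Longrightarrow> P d \<Longrightarrow> P (iota d) \<and> P (sigma G d) \<and> P (phi G d)"
    and e: "e \<in> comp_of G d0"
  shows "P e"
proof -
  have "(d0,e) \<in> (adj G \<union> (adj G)\<inverse>)\<^sup>*" using e by (simp add: comp_of_def)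
  then show ?thesis
  proof (induction rule: rtrancl_induct)
    case base then show ?case using P0 .
  next
    case (step d e)
    have dc: "d \<in> comp_of G d0" using step.hyps(1) by (simp add: comp_of_def)
    have sc: "sigma G d \<in> comp_of G d0" using comp_closed[OF d0 dc] by simp
    have Ps: "P (iota d)" "P (sigma G d)" "P (phi G d)" using stp[OF dc step.IH] by auto
    have Pis: "P (iota (sigma G d))" using stp[OF sc Ps(2)] by simp
    from step.hyps(2) have "(d,e) \<in> adj G \<or> (e,d) \<in> adj G" by auto
    then have "e = iota d \<or> e = iota (sigma G d) \<or> e = phi G d"
    proof
      assume "(d,e) \<in> adj G" then show ?thesis by (auto simp: adj_def)
    next
      assume "(e,d) \<in> adj G" then show ?thesis by (rule adj_rev)
    qed
    then show ?case using Ps Pis by auto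
  qed
qed

lemma adj_conj: "(d,e) \<in> adj G \<Longrightarrow> g \<in> carrier G \<Longrightarrow> (conj_dart G g d, conj_dart G g e) \<in> adj G"
proof -
  assume de: "(d,e) \<in> adj G" and g: "g \<in> carrier G"
  then have dt: "d \<in> tri G" and et: "e \<in> tri G" by (auto simp: adj_def)
  have cd: "fst d \<in> carrier G" "snd d \<in> carrier G" using tri_carr[OF dt] by auto
  have "e = iota d \<or> e = phi G d \<or> e = iota (sigma G d)" using de by (simp add: adj_def)
  then have "conj_dart G g e = iota (conj_dart G g d) \<or> conj_dart G g e = phi G (conj_dart G g d) \<or>
     conj_dart G g e = iota (sigma G (conj_dart G g d))"
    using g cd by (auto simp: conj_iota conj_sigma conj_phi)
  then show ?thesis using dt et g by (simp add: adj_def tri_conj)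
qed

lemma conj_comp_sub: "g \<in> carrier G \<Longrightarrow> conj_dart G g ` comp_of G d \<subseteq> comp_of G (conj_dart G g d)"
proof
  fix e' assume g: "g \<in> carrier G" and "e' \<in> conj_dart G g ` comp_of G d"
  then obtain e where e: "e \<in> comp_of G d" and e': "e' = conj_dart G g e" by auto
  have "(d,e) \<in> (adj G \<union> (adj G)\<inverse>)\<^sup>*" using e by (simp add: comp_of_def)
  then have "(conj_dart G g d, conj_dart G g e) \<in> (adj G \<union> (adj G)\<inverse>)\<^sup>*"
  proof (induction rule: rtrancl_induct)
    case base then show ?case by simp
  next
    case (step a b)
    have "(a,b) \<in> adj G \<or> (b,a) \<in> adj G" using step.hyps(2) by auto
    then have "(conj_dart G g a, conj_dart G g b) \<in> adj G \<union> (adj G)\<inverse>"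
      using adj_conj[OF _ g] by blast
    then show ?case using step.IH by (rule rtrancl_into_rtrancl[rotated])
  qed
  then show "e' \<in> comp_of G (conj_dart G g d)" using e' by (simp add: comp_of_def)
qed

lemma conj_comp: "g \<in> carrier G \<Longrightarrow> d \<in> tri G \<Longrightarrow> conj_dart G g ` comp_of G d = comp_of G (conj_dart G g d)"
proof
  assume g: "g \<in> carrier G" and d: "d \<in> tri G"
  show "conj_dart G g ` comp_of G d \<subseteq> comp_of G (conj_dart G g d)" using conj_comp_sub g by blast
  show "comp_of G (conj_dart G g d) \<subseteq> conj_dart G g ` comp_of G d"
  proof
    fix e assume e: "e \<in> comp_of G (conj_dart G g d)"
    have ct: "conj_dart G g d \<in> tri G" using tri_conj d g by blast
    have et: "e \<in> tri G" using comp_tri[OF ct] e by auto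
    have "conj_dart G (inv g) e \<in> conj_dart G (inv g) ` comp_of G (conj_dart G g d)" using e by auto
    also have "\<dots> \<subseteq> comp_of G (conj_dart G (inv g) (conj_dart G g d))" using conj_comp_sub g by blast
    also have "\<dots> = comp_of G d" using g tri_carr[OF d] by simp
    finally have "conj_dart G (inv g) e \<in> comp_of G d" .
    moreover have "e = conj_dart G g (conj_dart G (inv g) e)" using g tri_carr[OF et] by simp
    ultimately show "e \<in> conj_dart G g ` comp_of G d" by blast
  qed
qed

end


context group begin

lemma conj_img_mult: "T \<subseteq> tri G \<Longrightarrow> g \<in> carrier G \<Longrightarrow> h \<in> carrier G \<Longrightarrow>
    conj_dart G (g \<otimes> h) ` T = conj_dart G g ` conj_dart G h ` T"
  unfolding image_image by (rule image_cong[OF refl], rule conj_mult) (auto dest: tri_carr)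

lemma conj_img_inv: "T \<subseteq> tri G \<Longrightarrow> g \<in> carrier G \<Longrightarrow> conj_dart G (inv g) ` conj_dart G g ` T = T"
proof -
  assume T: "T \<subseteq> tri G" and g: "g \<in> carrier G"
  have "conj_dart G (inv g) ` conj_dart G g ` T = (\<lambda>d. d) ` T"
    unfolding image_image by (rule image_cong[OF refl], rule conj_inv_cancel) (use T g in \<open>auto dest: tri_carr\<close>)
  then show ?thesis by simp
qed

lemma conj_img_one: "T \<subseteq> tri G \<Longrightarrow> conj_dart G \<one> ` T = T"
proof -
  assume T: "T \<subseteq> tri G"
  have "conj_dart G \<one> ` T = (\<lambda>d. d) ` T"
    by (rule image_cong[OF refl]) (use T in \<open>auto dest!: tri_carr simp: conj_dart_eq\<close>)
  then show ?thesis by simp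
qed

lemma components_tri: "T \<in> components G \<Longrightarrow> T \<subseteq> tri G"
  by (auto simp: components_def dest: comp_tri)

lemma components_conj: "T \<in> components G \<Longrightarrow> g \<in> carrier G \<Longrightarrow> conj_dart G g ` T \<in> components G"
  by (auto simp: components_def conj_comp tri_conj)

lemma cell_iso_refl: "cell_iso G S S"
  unfolding cell_iso_def by (rule exI[of _ "\<lambda>d. d"]) (simp add: bij_betw_def)

lemma conj_inj_on: "T \<subseteq> tri G \<Longrightarrow> g \<in> carrier G \<Longrightarrow> inj_on (conj_dart G g) T"
  by (rule inj_on_inverseI[of _ "conj_dart G (inv g)"]) (auto dest!: tri_carr)

lemma cell_iso_conj:
  assumes ST: "cell_iso G S T" and T: "T \<subseteq> tri G" and g: "g \<in> carrier G"
    and Ss: "\<And>d. d \<in> S \<Longrightarrow> sigma G d \<in> S"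
  shows "cell_iso G S (conj_dart G g ` T)"
proof -
  obtain \<psi> where b: "bij_betw \<psi> S T" and i: "\<forall>d\<in>S. \<psi> (iota d) = iota (\<psi> d)"
    and s: "(\<forall>d\<in>S. \<psi> (sigma G d) = sigma G (\<psi> d)) \<or> (\<forall>d\<in>S. sigma G (\<psi> (sigma G d)) = \<psi> d)"
    using ST unfolding cell_iso_def by blast
  have bc: "bij_betw (conj_dart G g) T (conj_dart G g ` T)" using conj_inj_on[OF T g] by (simp add: bij_betw_def)
  have cT: "\<And>d. d \<in> S \<Longrightarrow> fst (\<psi> d) \<in> carrier G \<and> snd (\<psi> d) \<in> carrier G"
    using b T by (auto simp: bij_betw_def dest!: tri_carr)
  have "bij_betw (conj_dart G g \<circ> \<psi>) S (conj_dart G g ` T)" using b bc by (rule bij_betw_trans)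
  moreover have "\<forall>d\<in>S. (conj_dart G g \<circ> \<psi>) (iota d) = iota ((conj_dart G g \<circ> \<psi>) d)"
    using i by (simp add: conj_iota)
  moreover have "(\<forall>d\<in>S. (conj_dart G g \<circ> \<psi>) (sigma G d) = sigma G ((conj_dart G g \<circ> \<psi>) d)) \<or>
     (\<forall>d\<in>S. sigma G ((conj_dart G g \<circ> \<psi>) (sigma G d)) = (conj_dart G g \<circ> \<psi>) d)"
    using s
  proof
    assume "\<forall>d\<in>S. \<psi> (sigma G d) = sigma G (\<psi> d)"
    then show ?thesis using cT g by (simp add: conj_sigma)
  next
    assume h: "\<forall>d\<in>S. sigma G (\<psi> (sigma G d)) = \<psi> d"
    have "\<forall>d\<in>S. sigma G (conj_dart G g (\<psi> (sigma G d))) = conj_dart G g (\<psi> d)"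
    proof
      fix d assume d: "d \<in> S"
      have sd: "\<psi> (sigma G d) \<in> T" using b Ss[OF d] by (auto simp: bij_betw_def)
      then have "fst (\<psi> (sigma G d)) \<in> carrier G" "snd (\<psi> (sigma G d)) \<in> carrier G"
        using T by (auto dest!: tri_carr)
      then have "sigma G (conj_dart G g (\<psi> (sigma G d))) = conj_dart G g (sigma G (\<psi> (sigma G d)))"
        using g by (simp add: conj_sigma)
      also have "\<dots> = conj_dart G g (\<psi> d)" using h d by simp
      finally show "sigma G (conj_dart G g (\<psi> (sigma G d))) = conj_dart G g (\<psi> d)" .
    qed
    then show ?thesis by simp
  qed
  ultimately show ?thesis unfolding cell_iso_def by blast
qed

end


context group begin

lemma fix_normal:
  assumes F: "\<And>T. T \<in> F \<Longrightarrow> T \<subseteq> tri G"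
    and cl: "\<And>T g. T \<in> F \<Longrightarrow> g \<in> carrier G \<Longrightarrow> conj_dart G g ` T \<in> F"
  shows "{g \<in> carrier G. \<forall>T\<in>F. conj_dart G g ` T = T} \<lhd> G"
  unfolding normal_inv_iff
proof (intro conjI ballI)
  let ?K = "{g \<in> carrier G. \<forall>T\<in>F. conj_dart G g ` T = T}"
  show "subgroup ?K G"
  proof (rule subgroupI)
    show "?K \<subseteq> carrier G" by auto
    have "\<one> \<in> ?K" using conj_img_one F by auto
    then show "?K \<noteq> {}" by blast
  next
    fix a assume a: "a \<in> ?K"
    have ac: "a \<in> carrier G" using a by simp
    have "\<forall>T\<in>F. conj_dart G (inv a) ` T = T"
    proof
      fix T assume T: "T \<in> F"
      have "conj_dart G (inv a) ` T = conj_dart G (inv a) ` conj_dart G a ` T" using a T by simp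
      also have "\<dots> = T" using conj_img_inv[OF F[OF T] ac] .
      finally show "conj_dart G (inv a) ` T = T" .
    qed
    then show "inv a \<in> ?K" using ac by simp
  next
    fix a b assume a: "a \<in> ?K" and b: "b \<in> ?K"
    have "\<forall>T\<in>F. conj_dart G (a \<otimes> b) ` T = T"
    proof
      fix T assume T: "T \<in> F"
      show "conj_dart G (a \<otimes> b) ` T = T" using conj_img_mult[OF F[OF T]] a b T by simp
    qed
    then show "a \<otimes> b \<in> ?K" using a b by simp
  qed
next
  fix x h assume x: "x \<in> carrier G" and h: "h \<in> {g \<in> carrier G. \<forall>T\<in>F. conj_dart G g ` T = T}"
  have hc: "h \<in> carrier G" using h by auto
  have "\<forall>T\<in>F. conj_dart G (x \<otimes> h \<otimes> inv x) ` T = T"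
  proof
    fix T assume T: "T \<in> F"
    have T': "conj_dart G (inv x) ` T \<in> F" using cl T x by auto
    have Ts: "T \<subseteq> tri G" using F T by auto
    have T's: "conj_dart G (inv x) ` T \<subseteq> tri G" using F T' by auto
    have T''s: "conj_dart G h ` conj_dart G (inv x) ` T \<subseteq> tri G" using F T' h by auto
    have "conj_dart G (x \<otimes> h \<otimes> inv x) ` T = conj_dart G (x \<otimes> h) ` conj_dart G (inv x) ` T"
      using conj_img_mult[OF Ts] x hc by simp
    also have "\<dots> = conj_dart G x ` conj_dart G h ` conj_dart G (inv x) ` T"
      using conj_img_mult[OF T's] x hc by simp
    also have "\<dots> = conj_dart G x ` conj_dart G (inv x) ` T" using h T' by auto
    also have "\<dots> = T" using conj_img_inv[OF Ts, of "inv x"] x by simp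
    finally show "conj_dart G (x \<otimes> h \<otimes> inv x) ` T = T" .
  qed
  then show "x \<otimes> h \<otimes> inv x \<in> {g \<in> carrier G. \<forall>T\<in>F. conj_dart G g ` T = T}" using x hc by auto
qed

end

context simple_group begin
lemma stab_full:
  assumes fin: "finite (carrier G)"
    and S: "S \<in> components G"
    and k: "k = card {S' \<in> components G. cell_iso G S S'}"
    and kG: "fact k < order G"
  shows "stab G S = carrier G"
proof -
  define C where "C = {S' \<in> components G. cell_iso G S S'}"
  have Sclosed: "\<And>d. d \<in> S \<Longrightarrow> sigma G d \<in> S"
    using S comp_closed by (auto simp: components_def)
  have Ctri: "\<And>T. T \<in> C \<Longrightarrow> T \<subseteq> tri G" using components_tri by (auto simp: C_def)
  have Ccl: "conj_dart G g ` T \<in> C" if T: "T \<in> C" and g: "g \<in> carrier G" for T g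
  proof -
    have T1: "T \<in> components G" and T2: "cell_iso G S T" using T by (auto simp: C_def)
    have "conj_dart G g ` T \<in> components G" using components_conj[OF T1 g] .
    moreover have "cell_iso G S (conj_dart G g ` T)"
      using cell_iso_conj[OF T2 components_tri[OF T1] g Sclosed] by blast
    ultimately show ?thesis by (simp add: C_def)
  qed
  have finC: "finite C"
  proof -
    have "tri G \<subseteq> carrier G \<times> carrier G" by (auto simp: tri_def)
    then have "finite (tri G)" using fin finite_subset by blast
    then have "finite (Pow (tri G))" by simp
    moreover have "C \<subseteq> Pow (tri G)" using Ctri by auto
    ultimately show ?thesis using finite_subset by blast
  qed
  define K where "K = {g \<in> carrier G. \<forall>T\<in>C. conj_dart G g ` T = T}"
  have Kn: "K \<lhd> G" unfolding K_def using fix_normal[of C] Ctri Ccl by blast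
  have "K \<noteq> {\<one>}"
  proof
    assume K1: "K = {\<one>}"
    define p where "p g = (\<lambda>T. if T \<in> C then conj_dart G g ` T else T)" for g
    have perm: "p g permutes C" if g: "g \<in> carrier G" for g
    proof (rule bij_imp_permutes)
      show "bij_betw (p g) C C"
      proof (rule bij_betwI[of _ _ _ "p (inv g)"])
        show "p g \<in> C \<rightarrow> C" using Ccl g by (auto simp: p_def)
        show "p (inv g) \<in> C \<rightarrow> C" using Ccl g by (auto simp: p_def)
        show "p (inv g) (p g T) = T" if "T \<in> C" for T
          using that Ccl[OF that g] g conj_img_inv[OF Ctri[OF that] g] by (simp add: p_def)
        show "p g (p (inv g) T) = T" if "T \<in> C" for T
          using that Ccl[OF that, of "inv g"] g conj_img_inv[OF Ctri[OF that], of "inv g"] by (simp add: p_def)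
      qed
      show "p g T = T" if "T \<notin> C" for T using that by (simp add: p_def)
    qed
    have inj: "inj_on p (carrier G)"
    proof (rule inj_onI)
      fix g h assume g: "g \<in> carrier G" and h: "h \<in> carrier G" and e: "p g = p h"
      have "inv h \<otimes> g \<in> K" unfolding K_def
      proof (intro CollectI conjI ballI)
        show "inv h \<otimes> g \<in> carrier G" using g h by simp
        fix T assume T: "T \<in> C"
        have "conj_dart G g ` T = conj_dart G h ` T" using fun_cong[OF e, of T] T by (simp add: p_def)
        then have "conj_dart G (inv h) ` conj_dart G g ` T = T"
          using conj_img_inv[OF Ctri[OF T] h] by simp
        then show "conj_dart G (inv h \<otimes> g) ` T = T" using conj_img_mult[OF Ctri[OF T]] g h by simp
      qed
      then have "inv h \<otimes> g = \<one>" using K1 by simp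
      then have "h \<otimes> (inv h \<otimes> g) = h" using h by simp
      then show "g = h" using g h by (simp add: inv_cancel_l2)
    qed
    have "card (carrier G) \<le> card {q. q permutes C}"
      by (rule card_inj_on_le[OF inj]) (use perm finite_permutations[OF finC] in auto)
    also have "\<dots> = fact k" using card_permutations[OF _ finC] k C_def by simp
    finally show False using kG by (simp add: order_def)
  qed
  then have KG: "K = carrier G" using no_real_normal_subgroup[OF Kn] by blast
  have "S \<in> C" using S cell_iso_refl by (simp add: C_def)
  then show ?thesis using KG by (auto simp: stab_def K_def)
qed
end



context group begin

lemma centr_cj: "centr G x = {g \<in> carrier G. cj g x = x}" if "x \<in> carrier G"
  using that by (auto simp: centr_def cj_comm)

lemma comp_setup:
  assumes S: "S \<in> components G" and xy: "(x,y) \<in> S"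
  shows "S = comp_of G (x,y)" "(x,y) \<in> tri G" "x \<in> carrier G" "y \<in> carrier G" "x \<otimes> y \<noteq> y \<otimes> x"
proof -
  obtain d0 where d0: "d0 \<in> tri G" "S = comp_of G d0" using S by (auto simp: components_def)
  show "S = comp_of G (x,y)" using comp_eq xy d0 by simp
  show t: "(x,y) \<in> tri G" using comp_tri[OF d0(1)] d0(2) xy by auto
  then show "x \<in> carrier G" "y \<in> carrier G" "x \<otimes> y \<noteq> y \<otimes> x" by (auto simp: tri_def)
qed

lemma Z_lemma:
  assumes S: "S \<in> components G" and xy: "(x,y) \<in> S"
    and k: "k \<in> carrier G" "cj k x = x" "cj k y = y" and d: "d \<in> S"
  shows "cj k (fst d) = fst d \<and> cj k (snd d) = snd d"
proof -
  note cs = comp_setup[OF S xy]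
  show ?thesis
  proof (rule comp_induct[OF cs(2), of "\<lambda>d. cj k (fst d) = fst d \<and> cj k (snd d) = snd d"])
    show "cj k (fst (x, y)) = fst (x, y) \<and> cj k (snd (x, y)) = snd (x, y)" using k by simp
    show "d \<in> comp_of G (x, y)" using d cs(1) by simp
  next
    fix e assume e: "e \<in> comp_of G (x,y)" and P: "cj k (fst e) = fst e \<and> cj k (snd e) = snd e"
    have ec: "fst e \<in> carrier G" "snd e \<in> carrier G" using comp_tri[OF cs(2)] e by (auto dest!: tri_carr)
    have s: "cj k (cj (fst e) (snd e)) = cj (fst e) (snd e)"
      using cj_cj[OF k(1) ec] P by simp
    have p: "cj k (cj (inv (snd e)) (fst e)) = cj (inv (snd e)) (fst e)"
      using cj_cj[OF k(1) inv_closed[OF ec(2)] ec(1)] P cj_inv[OF k(1) ec(2)] by simp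
    show "(cj k (fst (iota e)) = fst (iota e) \<and> cj k (snd (iota e)) = snd (iota e)) \<and>
          (cj k (fst (sigma G e)) = fst (sigma G e) \<and> cj k (snd (sigma G e)) = snd (sigma G e)) \<and>
          (cj k (fst (phi G e)) = fst (phi G e) \<and> cj k (snd (phi G e)) = snd (phi G e))"
      using P s p ec by (simp add: iota_def sigma_eq phi_eq)
  qed
qed

end

context simple_group begin

lemma H_trivial:
  assumes S: "S \<in> components G" and xy: "(x,y) \<in> S" and st: "stab G S = carrier G"
  shows "centr G x \<inter> centr G y = {\<one>}"
proof -
  note cs = comp_setup[OF S xy]
  let ?H = "centr G x \<inter> centr G y"
  have Hd: "?H = {h \<in> carrier G. cj h x = x \<and> cj h y = y}"
    using centr_cj[OF cs(3)] centr_cj[OF cs(4)] by auto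
  have Hn: "?H \<lhd> G" unfolding normal_inv_iff Hd
  proof (intro conjI ballI)
    show "subgroup {h \<in> carrier G. cj h x = x \<and> cj h y = y} G"
    proof (rule subgroupI)
      have "\<one> \<in> {h \<in> carrier G. cj h x = x \<and> cj h y = y}" using cs by simp
      then show "{h \<in> carrier G. cj h x = x \<and> cj h y = y} \<noteq> {}" by blast
    next
      fix a assume a: "a \<in> {h \<in> carrier G. cj h x = x \<and> cj h y = y}"
      then have ac: "a \<in> carrier G" "cj a x = x" "cj a y = y" by auto
      have "cj (inv a) (cj a x) = x" "cj (inv a) (cj a y) = y" using ac(1) cs(3,4) by simp_all
      then have "cj (inv a) x = x" "cj (inv a) y = y" using ac by simp_all
      then show "inv a \<in> {h \<in> carrier G. cj h x = x \<and> cj h y = y}"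
        using ac by simp
    next
      fix a b assume "a \<in> {h \<in> carrier G. cj h x = x \<and> cj h y = y}" "b \<in> {h \<in> carrier G. cj h x = x \<and> cj h y = y}"
      then show "a \<otimes> b \<in> {h \<in> carrier G. cj h x = x \<and> cj h y = y}" using cs by (simp add: cj_mult)
    qed auto
  next
    fix g h assume g: "g \<in> carrier G" and h: "h \<in> {h \<in> carrier G. cj h x = x \<and> cj h y = y}"
    have hc: "h \<in> carrier G" "cj h x = x" "cj h y = y" using h by auto
    have "conj_dart G (inv g) (x,y) \<in> S" using st g xy by (auto simp: stab_def)
    then have z: "cj h (cj (inv g) x) = cj (inv g) x" "cj h (cj (inv g) y) = cj (inv g) y"
      using Z_lemma[OF S xy hc] by (auto simp: conj_dart_eq)
    have "cj (g \<otimes> h \<otimes> inv g) x = x" using g hc cs z by (simp add: cj_mult)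
    moreover have "cj (g \<otimes> h \<otimes> inv g) y = y" using g hc cs z by (simp add: cj_mult)
    ultimately show "g \<otimes> h \<otimes> inv g \<in> {h \<in> carrier G. cj h x = x \<and> cj h y = y}" using g hc by simp
  qed
  have "?H \<noteq> carrier G"
  proof
    assume "?H = carrier G"
    then have "x \<in> centr G y" using cs by auto
    then show False using cs by (simp add: centr_def)
  qed
  then show ?thesis using no_real_normal_subgroup[OF Hn] by blast
qed

end


context group begin

lemma iso_triv: "(\<lambda>g. {\<one>} #> g) \<in> iso G (G Mod {\<one>})"
proof -
  have e: "{\<one>} #> g = {g}" if "g \<in> carrier G" for g using that by (simp add: r_coset_def)
  have car: "carrier (G Mod {\<one>}) = (\<lambda>g. {g}) ` carrier G"
    by (auto simp: FactGroup_def RCOSETS_def e)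
  have h: "(\<lambda>g. {\<one>} #> g) \<in> hom G (G Mod {\<one>})"
      unfolding hom_def using car e by (auto simp: FactGroup_def set_mult_def)
  have b: "bij_betw (\<lambda>g. {\<one>} #> g) (carrier G) (carrier (G Mod {\<one>}))"
      unfolding bij_betw_def inj_on_def using car e by auto
  show ?thesis unfolding iso_def using h b by simp
qed

lemma orbit_form:
  assumes S: "S \<in> components G" and xy: "(x,y) \<in> S" and d: "d \<in> S"
  shows "\<exists>g\<in>carrier G. d = conj_dart G g (x,y) \<or> d = conj_dart G g (y,x)"
proof -
  note cs = comp_setup[OF S xy]
  show ?thesis
  proof (rule comp_induct[OF cs(2), of "\<lambda>d. \<exists>g\<in>carrier G. d = conj_dart G g (x,y) \<or> d = conj_dart G g (y,x)"])
    show "\<exists>g\<in>carrier G. (x, y) = conj_dart G g (x, y) \<or> (x, y) = conj_dart G g (y, x)"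
      using cs by (intro bexI[of _ \<one>]) (auto simp: conj_dart_eq)
    show "d \<in> comp_of G (x, y)" using d cs(1) by simp
  next
    fix e assume e: "e \<in> comp_of G (x,y)" and P: "\<exists>g\<in>carrier G. e = conj_dart G g (x,y) \<or> e = conj_dart G g (y,x)"
    have ec: "fst e \<in> carrier G" "snd e \<in> carrier G" using comp_tri[OF cs(2)] e by (auto dest!: tri_carr)
    from P obtain g where g: "g \<in> carrier G" and ge: "e = conj_dart G g (x,y) \<or> e = conj_dart G g (y,x)" by blast
    have i: "iota e = conj_dart G g (y,x) \<or> iota e = conj_dart G g (x,y)"
      using ge by (auto simp: conj_dart_eq iota_def)
    have s: "sigma G e = conj_dart G (fst e \<otimes> g) (x,y) \<or> sigma G e = conj_dart G (fst e \<otimes> g) (y,x)"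
      using ge sigma_conj[OF ec(1)] conj_mult[OF ec(1) g] cs by auto
    have p: "phi G e = conj_dart G (inv (snd e) \<otimes> g) (x,y) \<or> phi G e = conj_dart G (inv (snd e) \<otimes> g) (y,x)"
      using i phi_conj[OF ec] conj_mult[OF inv_closed[OF ec(2)] g] cs by auto
    show "(\<exists>g\<in>carrier G. iota e = conj_dart G g (x, y) \<or> iota e = conj_dart G g (y, x)) \<and>
       (\<exists>g\<in>carrier G. sigma G e = conj_dart G g (x, y) \<or> sigma G e = conj_dart G g (y, x)) \<and>
       (\<exists>g\<in>carrier G. phi G e = conj_dart G g (x, y) \<or> phi G e = conj_dart G g (y, x))"
      using i s p g ec by blast
  qed
qed

lemma aut_val:
  assumes a: "\<psi> \<in> aut_plus G S" and Ss: "\<And>d. d \<in> S \<Longrightarrow> sigma G d \<in> S" and d: "d \<in> S"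
  shows "valency G (\<psi> d) = valency G d"
proof -
  have b: "bij_betw \<psi> S S" and s: "\<forall>d\<in>S. \<psi> (sigma G d) = sigma G (\<psi> d)" using a by (auto simp: aut_plus_def)
  have inS: "(sigma G ^^ n) d \<in> S" for n by (induction n) (use d Ss in auto)
  have c: "\<psi> ((sigma G ^^ n) d) = (sigma G ^^ n) (\<psi> d)" for n
    by (induction n) (use s inS in auto)
  have "{(sigma G ^^ n) (\<psi> d) | n. True} = \<psi> ` {(sigma G ^^ n) d | n. True}"
    by (auto simp: c[symmetric])
  moreover have "inj_on \<psi> {(sigma G ^^ n) d | n. True}"
    using b inS by (auto simp: bij_betw_def intro: inj_on_subset)
  ultimately show ?thesis unfolding valency_def by (simp add: card_image)
qed

end


context group begin

lemma S_closed:
  assumes S: "S \<in> components G" and xy: "(x,y) \<in> S" and d: "d \<in> S"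
  shows "iota d \<in> S" "sigma G d \<in> S" "phi G d \<in> S" "d \<in> tri G"
  using comp_closed[OF comp_setup(2)[OF S xy]] comp_setup(1)[OF S xy] d
    comp_tri[OF comp_setup(2)[OF S xy]] by auto

lemma sigma_phi: "fst d \<in> carrier G \<Longrightarrow> snd d \<in> carrier G \<Longrightarrow> sigma G (phi G d) = iota d"
  by (simp add: sigma_eq phi_eq iota_def)

lemma aut_in:
  assumes S: "S \<in> components G" and xy: "(x,y) \<in> S" and st: "stab G S = carrier G" and g: "g \<in> carrier G"
  shows "restrict (conj_dart G g) S \<in> aut_plus G S"
proof -
  have "g \<in> stab G S" using st g by simp
  then have Sc: "conj_dart G g ` S = S" by (simp add: stab_def)
  have St: "S \<subseteq> tri G" using S_closed(4)[OF S xy] by blast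
  have b: "bij_betw (conj_dart G g) S S" using conj_inj_on[OF St g] Sc by (simp add: bij_betw_def)
  have b2: "bij_betw (restrict (conj_dart G g) S) S S" using b by (simp only: bij_betw_restrict_eq)
  have i: "\<forall>d\<in>S. restrict (conj_dart G g) S (iota d) = iota (restrict (conj_dart G g) S d)"
    using S_closed[OF S xy] by (simp add: conj_iota)
  have s: "\<forall>d\<in>S. restrict (conj_dart G g) S (sigma G d) = sigma G (restrict (conj_dart G g) S d)"
  proof
    fix d assume d: "d \<in> S"
    have "fst d \<in> carrier G" "snd d \<in> carrier G" using S_closed(4)[OF S xy d] by (auto dest!: tri_carr)
    then show "restrict (conj_dart G g) S (sigma G d) = sigma G (restrict (conj_dart G g) S d)"
      using S_closed(2)[OF S xy d] d g by (simp add: conj_sigma)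
  qed
  have ex: "restrict (conj_dart G g) S \<in> extensional S" by (rule restrict_extensional)
  show ?thesis unfolding aut_plus_def using ex b2 i s by (intro CollectI conjI)
qed

lemma aut_agree:
  assumes S: "S \<in> components G" and xy: "(x,y) \<in> S"
    and a: "\<psi> \<in> aut_plus G S" and b: "\<phi> \<in> aut_plus G S" and e: "\<psi> (x,y) = \<phi> (x,y)"
  shows "\<psi> = \<phi>"
proof -
  note cs = comp_setup[OF S xy]
  have pa: "bij_betw \<psi> S S" "\<forall>d\<in>S. \<psi> (iota d) = iota (\<psi> d)" "\<forall>d\<in>S. \<psi> (sigma G d) = sigma G (\<psi> d)"
    using a by (auto simp: aut_plus_def)
  have pb: "bij_betw \<phi> S S" "\<forall>d\<in>S. \<phi> (iota d) = iota (\<phi> d)" "\<forall>d\<in>S. \<phi> (sigma G d) = sigma G (\<phi> d)"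
    using b by (auto simp: aut_plus_def)
  have all: "\<psi> d = \<phi> d" if d: "d \<in> S" for d
  proof (rule comp_induct[OF cs(2), of "\<lambda>d. \<psi> d = \<phi> d"])
    show "\<psi> (x, y) = \<phi> (x, y)" by (rule e)
    show "d \<in> comp_of G (x,y)" using d cs(1) by simp
  next
    fix d assume d: "d \<in> comp_of G (x,y)" and P: "\<psi> d = \<phi> d"
    have dS: "d \<in> S" using d cs(1) by simp
    note cl = S_closed[OF S xy dS]
    have dc: "fst d \<in> carrier G" "snd d \<in> carrier G" using cl(4) by (auto dest!: tri_carr)
    have 1: "\<psi> (iota d) = \<phi> (iota d)" using pa pb dS P by simp
    have 2: "\<psi> (sigma G d) = \<phi> (sigma G d)" using pa pb dS P by simp
    have "sigma G (\<psi> (phi G d)) = \<psi> (sigma G (phi G d))" using pa(3) cl(3) by simp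
    also have "\<dots> = \<psi> (iota d)" using sigma_phi[OF dc] by simp
    also have "\<dots> = \<phi> (iota d)" by (rule 1)
    also have "\<dots> = \<phi> (sigma G (phi G d))" using sigma_phi[OF dc] by simp
    also have "\<dots> = sigma G (\<phi> (phi G d))" using pb(3) cl(3) by simp
    finally have "sigma G (\<psi> (phi G d)) = sigma G (\<phi> (phi G d))" .
    moreover have "\<psi> (phi G d) \<in> S" "\<phi> (phi G d) \<in> S"
      using pa(1) pb(1) cl(3) by (auto simp: bij_betw_def)
    then have "\<psi> (phi G d) \<in> tri G" "\<phi> (phi G d) \<in> tri G" using S_closed(4)[OF S xy] by blast+
    ultimately have 3: "\<psi> (phi G d) = \<phi> (phi G d)"
      using sigma_inj tri_carr by blast
    show "\<psi> (iota d) = \<phi> (iota d) \<and> \<psi> (sigma G d) = \<phi> (sigma G d) \<and> \<psi> (phi G d) = \<phi> (phi G d)"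
      using 1 2 3 by simp
  qed
  show ?thesis
    by (rule extensionalityI[of _ S]) (use a b all in \<open>auto simp: aut_plus_def\<close>)
qed

end



theorem lemma3p6:
  fixes G :: "('a, 'b) monoid_scheme" and S :: "('a \<times> 'a) set" and x y :: 'a and k :: nat
  assumes "simple_group G" and "finite (carrier G)" and "\<not> comm_group G"
    and "S \<in> components G" and "(x, y) \<in> S"
    and "k = card {S' \<in> components G. cell_iso G S S'}"
    and "fact k < order G"
  shows "stab G S = carrier G \<and>
         (\<lambda>g. (centr G x \<inter> centr G y) #>\<^bsub>G\<^esub> g) \<in> iso G (Qbar G S x y) \<and>
         (valency G (x, y) \<noteq> valency G (y, x) \<longrightarrow>
         bij_betw (\<lambda>g. restrict (conj_dart G g) S) (carrier G) (aut_plus G S))"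
proof -
  interpret simple_group G by fact
  note S = assms(4) and xy = assms(5)
  have st: "stab G S = carrier G" using stab_full[OF assms(2,4,6,7)] .
  have H1: "centr G x \<inter> centr G y = {\<one>\<^bsub>G\<^esub>}" using H_trivial[OF S xy st] .
  note cs = comp_setup[OF S xy]
  have Q: "Qbar G S x y = G Mod {\<one>\<^bsub>G\<^esub>}" unfolding Qbar_def st H1 by simp
  have iso: "(\<lambda>g. (centr G x \<inter> centr G y) #>\<^bsub>G\<^esub> g) \<in> iso G (Qbar G S x y)"
    unfolding Q H1 by (rule iso_triv)
  have Ss: "\<And>d. d \<in> S \<Longrightarrow> sigma G d \<in> S" using S_closed[OF S xy] by blast
  have yx: "(y,x) \<in> S" using S_closed(1)[OF S xy xy] by (simp add: iota_def)
  have aut: "bij_betw (\<lambda>g. restrict (conj_dart G g) S) (carrier G) (aut_plus G S)"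
    if nv: "valency G (x, y) \<noteq> valency G (y, x)"
  proof -
    have inj: "inj_on (\<lambda>g. restrict (conj_dart G g) S) (carrier G)"
    proof (rule inj_onI)
      fix g h assume g: "g \<in> carrier G" and h: "h \<in> carrier G"
        and e: "restrict (conj_dart G g) S = restrict (conj_dart G h) S"
      have "conj_dart G g (x,y) = conj_dart G h (x,y)" using fun_cong[OF e, of "(x,y)"] xy by simp
      then have "conj_dart G (inv\<^bsub>G\<^esub> h) (conj_dart G g (x,y)) = (x,y)" using h cs by simp
      then have "conj_dart G (inv\<^bsub>G\<^esub> h \<otimes>\<^bsub>G\<^esub> g) (x,y) = (x,y)" using conj_mult g h cs by simp
      then have "cj (inv\<^bsub>G\<^esub> h \<otimes>\<^bsub>G\<^esub> g) x = x" "cj (inv\<^bsub>G\<^esub> h \<otimes>\<^bsub>G\<^esub> g) y = y"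
        by (simp_all add: conj_dart_eq)
      then have "inv\<^bsub>G\<^esub> h \<otimes>\<^bsub>G\<^esub> g \<in> centr G x \<inter> centr G y"
        using centr_cj[OF cs(3)] centr_cj[OF cs(4)] g h by simp
      then have "inv\<^bsub>G\<^esub> h \<otimes>\<^bsub>G\<^esub> g = \<one>\<^bsub>G\<^esub>" using H1 by simp
      then have "h \<otimes>\<^bsub>G\<^esub> (inv\<^bsub>G\<^esub> h \<otimes>\<^bsub>G\<^esub> g) = h" using h by simp
      then show "g = h" using g h by (simp add: inv_cancel_l2)
    qed
    have img: "(\<lambda>g. restrict (conj_dart G g) S) ` carrier G = aut_plus G S"
    proof
      show "(\<lambda>g. restrict (conj_dart G g) S) ` carrier G \<subseteq> aut_plus G S"
        using aut_in[OF S xy st] by blast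
      show "aut_plus G S \<subseteq> (\<lambda>g. restrict (conj_dart G g) S) ` carrier G"
      proof
        fix \<psi> assume p: "\<psi> \<in> aut_plus G S"
        have "\<psi> (x,y) \<in> S" using p xy by (auto simp: aut_plus_def bij_betw_def)
        then obtain g where g: "g \<in> carrier G"
          and ge: "\<psi> (x,y) = conj_dart G g (x,y) \<or> \<psi> (x,y) = conj_dart G g (y,x)"
          using orbit_form[OF S xy] by blast
        have ag: "restrict (conj_dart G g) S \<in> aut_plus G S" using aut_in[OF S xy st g] .
        have v1: "valency G (\<psi> (x,y)) = valency G (x,y)" using aut_val[OF p Ss xy] .
        have v2: "valency G (restrict (conj_dart G g) S (y,x)) = valency G (y,x)" using aut_val[OF ag Ss yx] .
        have "\<psi> (x,y) = conj_dart G g (x,y)"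
        proof (rule ccontr)
          assume "\<psi> (x,y) \<noteq> conj_dart G g (x,y)"
          then have "\<psi> (x,y) = conj_dart G g (y,x)" using ge by blast
          then show False using v1 v2 yx nv by simp
        qed
        then have "\<psi> (x,y) = restrict (conj_dart G g) S (x,y)" using xy by simp
        then have "\<psi> = restrict (conj_dart G g) S" using aut_agree[OF S xy p ag] by blast
        then show "\<psi> \<in> (\<lambda>g. restrict (conj_dart G g) S) ` carrier G" using g by blast
      qed
    qed
    show ?thesis using inj img by (simp add: bij_betw_def)
  qed
  show ?thesis using st iso aut by blast
qed


end
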